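(* Let $n$ be even, and let $S_1$ and $S_2$ be two disjoint sets of cells of an $n\times n$ array, each of which forms a $2$-factor that is the union of two cycles of length $n$. Then for any positive integers $s,t,u,v$ with $s>t+n$, $t>u+n$ and $u>v+n$, the cells of $S_1\cup S_2$ can be filled with nonzero integers so that the resulting array is shiftable, has support $\{s+i,\ t+i,\ u+i,\ v+i\mid 1\le i\le n\}$ (each of these $4n$ absolute values occurring exactly once), and the four entries in each row and in each column sum to $0$.
   Context: Cells of an $n\times n$ array are identified with edges of $K_{n,n}$ (cell $(i,j)$ ↔ edge $\{a_i,b_j\}$). A set of cells forms a $2$-factor if the corresponding edges form a spanning $2$-regular subgraph of $K_{n,n}$; a cycle of length $n$ here means a cycle in $K_{n,n}$ with $n$ edges. The support of an array is the set of absolute values of its entries. An array is shiftable if each row and each column contains the same number of positive and negative entries. *)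

theory Defs
  imports Main
begin

text \<open>Cells of an n x n array are pairs (i,j) with i,j < n; cell (i,j) corresponds
to the edge {a_i, b_j} of K_{n,n}.\<close>

definition cells :: "nat \<Rightarrow> (nat \<times> nat) set" where
  "cells n = {..<n} \<times> {..<n}"

definition two_factor :: "nat \<Rightarrow> (nat \<times> nat) set \<Rightarrow> bool" where
  "two_factor n S \<longleftrightarrow> S \<subseteq> cells n
     \<and> (\<forall>i<n. card {j. (i, j) \<in> S} = 2)
     \<and> (\<forall>j<n. card {i. (i, j) \<in> S} = 2)"

text \<open>A set of cells C is (the edge set of) a cycle of length L in K_{n,n}:
a bipartite cycle a_{r 0} b_{c 0} a_{r 1} b_{c 1} ... a_{r (m-1)} b_{c (m-1)} a_{r 0}
with m = L/2 \<ge> 2 distinct rows and m distinct columns.\<close>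

definition bip_cycle :: "nat \<Rightarrow> nat \<Rightarrow> (nat \<times> nat) set \<Rightarrow> bool" where
  "bip_cycle n L C \<longleftrightarrow> (\<exists>m r c. L = 2 * m \<and> 2 \<le> m
     \<and> inj_on r {..<m} \<and> inj_on c {..<m}
     \<and> r ` {..<m} \<subseteq> {..<n} \<and> c ` {..<m} \<subseteq> {..<n}
     \<and> C = {(r k, c k) | k. k < m} \<union> {(r (Suc k mod m), c k) | k. k < m})"

definition two_cycle_factor :: "nat \<Rightarrow> (nat \<times> nat) set \<Rightarrow> bool" where
  "two_cycle_factor n S \<longleftrightarrow> two_factor n S
     \<and> (\<exists>C1 C2. C1 \<inter> C2 = {} \<and> S = C1 \<union> C2 \<and> bip_cycle n n C1 \<and> bip_cycle n n C2)"

text \<open>An n x n (partially filled) integer array is represented by A :: nat => nat => int,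
with empty cells holding 0 (all filled cells hold nonzero entries).\<close>

definition shiftable :: "nat \<Rightarrow> (nat \<Rightarrow> nat \<Rightarrow> int) \<Rightarrow> bool" where
  "shiftable n A \<longleftrightarrow>
     (\<forall>i<n. card {j. j < n \<and> A i j > 0} = card {j. j < n \<and> A i j < 0})
   \<and> (\<forall>j<n. card {i. i < n \<and> A i j > 0} = card {i. i < n \<and> A i j < 0})"

end

theory Submission
  imports Defs
begin


definition lab_g :: "int \<Rightarrow> int \<Rightarrow> nat \<Rightarrow> int" where
  "lab_g \<sigma> X q = \<sigma> * (if even q then 1 else -1) * (X + int q + 1)"

lemma lab_g_nz: "\<sigma> \<noteq> 0 \<Longrightarrow> X \<ge> 0 \<Longrightarrow> lab_g \<sigma> X q \<noteq> 0"
  by (simp add: lab_g_def)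

lemma card_pair_sign:
  assumes "even a" "odd b" "\<sigma> = 1 \<or> \<sigma> = -1" "X \<ge> 0"
  shows "card {q \<in> {a, b}. lab_g \<sigma> X q > 0} = 1" "card {q \<in> {a, b}. lab_g \<sigma> X q < 0} = 1"
proof -
  have ab: "a \<noteq> b" using assms by auto
  have p: "X + int a + 1 > 0" "X + int b + 1 > 0" using assms by auto
  from assms(3) show "card {q \<in> {a, b}. lab_g \<sigma> X q > 0} = 1"
  proof
    assume s: "\<sigma> = 1"
    have "{q \<in> {a, b}. lab_g \<sigma> X q > 0} = {a}" using s p assms(1,2) by (auto simp: lab_g_def)
    thus ?thesis by simp
  next
    assume s: "\<sigma> = -1"
    have "{q \<in> {a, b}. lab_g \<sigma> X q > 0} = {b}" using s p assms(1,2) by (auto simp: lab_g_def)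
    thus ?thesis by simp
  qed
  from assms(3) show "card {q \<in> {a, b}. lab_g \<sigma> X q < 0} = 1"
  proof
    assume s: "\<sigma> = 1"
    have "{q \<in> {a, b}. lab_g \<sigma> X q < 0} = {b}" using s p assms(1,2) by (auto simp: lab_g_def)
    thus ?thesis by simp
  next
    assume s: "\<sigma> = -1"
    have "{q \<in> {a, b}. lab_g \<sigma> X q < 0} = {a}" using s p assms(1,2) by (auto simp: lab_g_def)
    thus ?thesis by simp
  qed
qed

locale cyc =
  fixes m :: nat and r c :: "nat \<Rightarrow> nat"
  assumes m2: "2 \<le> m" and ir: "inj_on r {..<m}" and ic: "inj_on c {..<m}"
    and rr: "r ` {..<m} \<subseteq> {..<2*m}" and cr: "c ` {..<m} \<subseteq> {..<2*m}"
begin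

definition pos :: "nat \<Rightarrow> nat \<times> nat" where
  "pos q = (if even q then (r (q div 2), c (q div 2)) else (r (Suc (q div 2) mod m), c (q div 2)))"

lemma suc_mod_ne: "k < m \<Longrightarrow> Suc k mod m \<noteq> k"
proof (cases "Suc k < m")
  case True thus ?thesis by simp
next
  case False
  assume k: "k < m"
  hence "Suc k = m" using False by simp
  thus ?thesis using m2 by auto
qed

lemma pos_inj: "inj_on pos {..<2*m}"
proof
  fix q q' assume q: "q \<in> {..<2*m}" and q': "q' \<in> {..<2*m}" and e: "pos q = pos q'"
  have d: "q div 2 < m" "q' div 2 < m" using q q' by auto
  have "c (q div 2) = c (q' div 2)" using e by (auto simp: pos_def split: if_splits)
  hence dd: "q div 2 = q' div 2" using ic d by (auto dest: inj_onD)
  have sm: "Suc (q div 2) mod m < m" using m2 by auto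
  show "q = q'"
  proof (cases "even q = even q'")
    case True thus ?thesis using dd by (metis div_mult_mod_eq mod2_eq_if)
  next
    case False
    then have "r (q div 2) = r (Suc (q div 2) mod m)" using e dd by (auto simp: pos_def split: if_splits)
    hence "q div 2 = Suc (q div 2) mod m" using ir d sm by (auto dest: inj_onD)
    thus ?thesis using suc_mod_ne d by metis
  qed
qed

lemma rowset: assumes k: "k < m"
  shows "{q. q < 2*m \<and> fst (pos q) = r k} = {2*k, if k = 0 then 2*m - 1 else 2*k - 1}"
proof (rule set_eqI, rule iffI)
  fix q assume "q \<in> {q. q < 2*m \<and> fst (pos q) = r k}"
  hence q: "q < 2*m" and e: "fst (pos q) = r k" by auto
  have d: "q div 2 < m" using q by auto
  have sm: "Suc (q div 2) mod m < m" using m2 by auto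
  show "q \<in> {2*k, if k = 0 then 2*m - 1 else 2*k - 1}"
  proof (cases "even q")
    case True
    hence "r (q div 2) = r k" using e by (simp add: pos_def)
    hence "q div 2 = k" using ir d k by (auto dest: inj_onD)
    thus ?thesis using True by auto
  next
    case False
    hence "r (Suc (q div 2) mod m) = r k" using e by (simp add: pos_def)
    hence h: "Suc (q div 2) mod m = k" using ir sm k by (auto dest: inj_onD)
    show ?thesis
    proof (cases "Suc (q div 2) < m")
      case True
      hence "Suc (q div 2) = k" using h by simp
      moreover have "q = 2 * (q div 2) + 1" using False by simp
      ultimately have "k \<noteq> 0" "q = 2*k - 1" by linarith+
      thus ?thesis by simp
    next
      case False2: False
      hence "Suc (q div 2) = m" using d by simp
      moreover have "q = 2 * (q div 2) + 1" using False by simp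
      ultimately have "k = 0" "q = 2*m - 1" using h by auto
      thus ?thesis by auto
    qed
  qed
next
  fix q assume "q \<in> {2*k, if k = 0 then 2*m - 1 else 2*k - 1}"
  then consider "q = 2*k" | "k = 0" "q = 2*m - 1" | "k \<noteq> 0" "q = 2*k - 1" by (auto split: if_splits)
  thus "q \<in> {q. q < 2*m \<and> fst (pos q) = r k}"
  proof cases
    case 1 thus ?thesis using k by (simp add: pos_def)
  next
    case 2
    have "odd q" "q div 2 = m - 1" using 2 m2 by presburger+
    thus ?thesis using 2 m2 by (auto simp: pos_def)
  next
    case 3
    have "odd q" "q div 2 = k - 1" using 3 by presburger+
    thus ?thesis using 3 k by (auto simp: pos_def)
  qed
qed

lemma rowset_empty: assumes "i \<notin> r ` {..<m}"
  shows "{q. q < 2*m \<and> fst (pos q) = i} = {}"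
proof -
  have "\<And>q. q < 2*m \<Longrightarrow> fst (pos q) \<in> r ` {..<m}" using m2 by (auto simp: pos_def)
  thus ?thesis using assms by auto
qed

lemma colset: assumes k: "k < m"
  shows "{q. q < 2*m \<and> snd (pos q) = c k} = {2*k, 2*k+1}"
proof (rule set_eqI, rule iffI)
  fix q assume "q \<in> {q. q < 2*m \<and> snd (pos q) = c k}"
  hence q: "q < 2*m" and e: "snd (pos q) = c k" by auto
  have d: "q div 2 < m" using q by auto
  have "c (q div 2) = c k" using e by (simp add: pos_def split: if_splits)
  hence "q div 2 = k" using ic d k by (auto dest: inj_onD)
  moreover have "q = 2 * (q div 2) \<or> q = 2 * (q div 2) + 1" by presburger
  ultimately show "q \<in> {2*k, 2*k+1}" by auto
next
  fix q assume "q \<in> {2*k, 2*k+1}"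
  thus "q \<in> {q. q < 2*m \<and> snd (pos q) = c k}" using k by (auto simp: pos_def)
qed

lemma colset_empty: assumes "j \<notin> c ` {..<m}"
  shows "{q. q < 2*m \<and> snd (pos q) = j} = {}"
proof -
  have "\<And>q. q < 2*m \<Longrightarrow> snd (pos q) \<in> c ` {..<m}" by (auto simp: pos_def)
  thus ?thesis using assms by auto
qed

lemma fst_img: "fst ` pos ` {..<2*m} = r ` {..<m}"
proof
  show "fst ` pos ` {..<2*m} \<subseteq> r ` {..<m}" using m2 by (auto simp: pos_def)
  show "r ` {..<m} \<subseteq> fst ` pos ` {..<2*m}"
  proof
    fix x assume "x \<in> r ` {..<m}"
    then obtain k where "k < m" "x = r k" by auto
    hence "pos (2*k) = (r k, c k)" by (simp add: pos_def)
    moreover have "2*k \<in> {..<2*m}" using \<open>k < m\<close> by simp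
    ultimately show "x \<in> fst ` pos ` {..<2*m}" using \<open>x = r k\<close> by (metis image_eqI fst_conv)
  qed
qed

lemma snd_img: "snd ` pos ` {..<2*m} = c ` {..<m}"
proof
  show "snd ` pos ` {..<2*m} \<subseteq> c ` {..<m}" by (auto simp: pos_def)
  show "c ` {..<m} \<subseteq> snd ` pos ` {..<2*m}"
  proof
    fix x assume "x \<in> c ` {..<m}"
    then obtain k where k: "k < m" "x = c k" by auto
    hence "pos (2*k) = (r k, c k)" by (simp add: pos_def)
    moreover have "2*k \<in> {..<2*m}" using k by simp
    ultimately show "x \<in> snd ` pos ` {..<2*m}" using k by (metis image_eqI snd_conv)
  qed
qed


definition F :: "int \<Rightarrow> int \<Rightarrow> nat \<Rightarrow> nat \<Rightarrow> int" where
  "F \<sigma> X i j = (if (i, j) \<in> pos ` {..<2*m} then lab_g \<sigma> X (the_inv_into {..<2*m} pos (i, j)) else 0)"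

lemma F_pos: "q < 2*m \<Longrightarrow> F \<sigma> X (fst (pos q)) (snd (pos q)) = lab_g \<sigma> X q"
  using pos_inj by (simp add: F_def the_inv_into_f_f)

lemma F_out: "(i, j) \<notin> pos ` {..<2*m} \<Longrightarrow> F \<sigma> X i j = 0"
  by (simp add: F_def)

lemma F_in: "\<sigma> \<noteq> 0 \<Longrightarrow> X \<ge> 0 \<Longrightarrow> (i, j) \<in> pos ` {..<2*m} \<Longrightarrow> F \<sigma> X i j \<noteq> 0"
  using lab_g_nz by (auto simp: F_def)

lemma pos_lt: "q < 2*m \<Longrightarrow> fst (pos q) < 2*m \<and> snd (pos q) < 2*m"
proof -
  assume q: "q < 2*m"
  have "fst (pos q) \<in> fst ` pos ` {..<2*m}" "snd (pos q) \<in> snd ` pos ` {..<2*m}" using q by auto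
  thus ?thesis using fst_img snd_img rr cr by blast
qed

lemma snd_pos_inj: "inj_on (\<lambda>q. snd (pos q)) {q. q < 2*m \<and> fst (pos q) = i \<and> Q q}"
proof (rule inj_onI)
  fix q q' assume "q \<in> {q. q < 2*m \<and> fst (pos q) = i \<and> Q q}" "q' \<in> {q. q < 2*m \<and> fst (pos q) = i \<and> Q q}"
    and e: "snd (pos q) = snd (pos q')"
  hence "q < 2*m" "q' < 2*m" "pos q = pos q'" by (auto intro: prod_eqI)
  thus "q = q'" using pos_inj by (auto dest: inj_onD)
qed

lemma fst_pos_inj: "inj_on (\<lambda>q. fst (pos q)) {q. q < 2*m \<and> snd (pos q) = j \<and> Q q}"
proof (rule inj_onI)
  fix q q' assume "q \<in> {q. q < 2*m \<and> snd (pos q) = j \<and> Q q}" "q' \<in> {q. q < 2*m \<and> snd (pos q) = j \<and> Q q}"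
    and e: "fst (pos q) = fst (pos q')"
  hence "q < 2*m" "q' < 2*m" "pos q = pos q'" by (auto intro: prod_eqI)
  thus "q = q'" using pos_inj by (auto dest: inj_onD)
qed

lemma row_img:
  assumes "\<not> P 0"
  shows "{j. j < 2*m \<and> P (F \<sigma> X i j)} = (\<lambda>q. snd (pos q)) ` {q. q < 2*m \<and> fst (pos q) = i \<and> P (lab_g \<sigma> X q)}"
proof (rule set_eqI, rule iffI)
  fix j assume "j \<in> {j. j < 2*m \<and> P (F \<sigma> X i j)}"
  hence j: "j < 2*m" "P (F \<sigma> X i j)" by auto
  show "j \<in> (\<lambda>q. snd (pos q)) ` {q. q < 2*m \<and> fst (pos q) = i \<and> P (lab_g \<sigma> X q)}"
  proof (cases "(i, j) \<in> pos ` {..<2*m}")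
    case True
    then obtain q where q: "q < 2*m" "pos q = (i, j)" by auto
    hence "F \<sigma> X i j = lab_g \<sigma> X q" using F_pos[of q] by (metis fst_conv snd_conv)
    hence "P (lab_g \<sigma> X q)" using j by simp
    moreover have "j = snd (pos q)" "fst (pos q) = i" using q by auto
    ultimately show ?thesis using q by blast
  next
    case False
    hence "F \<sigma> X i j = 0" by (rule F_out)
    thus ?thesis using j assms by simp
  qed
next
  fix j assume "j \<in> (\<lambda>q. snd (pos q)) ` {q. q < 2*m \<and> fst (pos q) = i \<and> P (lab_g \<sigma> X q)}"
  then obtain q where q: "q < 2*m" "fst (pos q) = i" "P (lab_g \<sigma> X q)" "j = snd (pos q)" by auto
  thus "j \<in> {j. j < 2*m \<and> P (F \<sigma> X i j)}" using F_pos[of q] pos_lt[of q] by auto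
qed

lemma col_img:
  assumes "\<not> P 0"
  shows "{i. i < 2*m \<and> P (F \<sigma> X i j)} = (\<lambda>q. fst (pos q)) ` {q. q < 2*m \<and> snd (pos q) = j \<and> P (lab_g \<sigma> X q)}"
proof (rule set_eqI, rule iffI)
  fix i assume "i \<in> {i. i < 2*m \<and> P (F \<sigma> X i j)}"
  hence j: "i < 2*m" "P (F \<sigma> X i j)" by auto
  show "i \<in> (\<lambda>q. fst (pos q)) ` {q. q < 2*m \<and> snd (pos q) = j \<and> P (lab_g \<sigma> X q)}"
  proof (cases "(i, j) \<in> pos ` {..<2*m}")
    case True
    then obtain q where q: "q < 2*m" "pos q = (i, j)" by auto
    hence "F \<sigma> X i j = lab_g \<sigma> X q" using F_pos[of q] by (metis fst_conv snd_conv)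
    hence "P (lab_g \<sigma> X q)" using j by simp
    moreover have "i = fst (pos q)" "snd (pos q) = j" using q by auto
    ultimately show ?thesis using q by blast
  next
    case False
    hence "F \<sigma> X i j = 0" by (rule F_out)
    thus ?thesis using j assms by simp
  qed
next
  fix i assume "i \<in> (\<lambda>q. fst (pos q)) ` {q. q < 2*m \<and> snd (pos q) = j \<and> P (lab_g \<sigma> X q)}"
  then obtain q where q: "q < 2*m" "snd (pos q) = j" "P (lab_g \<sigma> X q)" "i = fst (pos q)" by auto
  thus "i \<in> {i. i < 2*m \<and> P (F \<sigma> X i j)}" using F_pos[of q] pos_lt[of q] by auto
qed


lemma row_sum_gen:
  assumes "\<sigma> \<noteq> 0" "X \<ge> 0"
  shows "(\<Sum>j<2*m. F \<sigma> X i j) = (\<Sum>q\<in>{q. q < 2*m \<and> fst (pos q) = i}. lab_g \<sigma> X q)"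
proof -
  have "(\<Sum>j<2*m. F \<sigma> X i j) = (\<Sum>j\<in>{j. j < 2*m \<and> F \<sigma> X i j \<noteq> 0}. F \<sigma> X i j)"
    by (rule sum.mono_neutral_right) auto
  also have "\<dots> = (\<Sum>j\<in>(\<lambda>q. snd (pos q)) ` {q. q < 2*m \<and> fst (pos q) = i \<and> lab_g \<sigma> X q \<noteq> 0}. F \<sigma> X i j)"
    using row_img[of "\<lambda>x. x \<noteq> 0"] by simp
  also have "\<dots> = (\<Sum>q\<in>{q. q < 2*m \<and> fst (pos q) = i \<and> lab_g \<sigma> X q \<noteq> 0}. F \<sigma> X i (snd (pos q)))"
    by (rule sum.reindex[OF snd_pos_inj, unfolded comp_def])
  also have "\<dots> = (\<Sum>q\<in>{q. q < 2*m \<and> fst (pos q) = i}. lab_g \<sigma> X q)"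
    using lab_g_nz[OF assms] F_pos by (intro sum.cong) auto
  finally show ?thesis .
qed

lemma col_sum_gen:
  assumes "\<sigma> \<noteq> 0" "X \<ge> 0"
  shows "(\<Sum>i<2*m. F \<sigma> X i j) = (\<Sum>q\<in>{q. q < 2*m \<and> snd (pos q) = j}. lab_g \<sigma> X q)"
proof -
  have "(\<Sum>i<2*m. F \<sigma> X i j) = (\<Sum>i\<in>{i. i < 2*m \<and> F \<sigma> X i j \<noteq> 0}. F \<sigma> X i j)"
    by (rule sum.mono_neutral_right) auto
  also have "\<dots> = (\<Sum>i\<in>(\<lambda>q. fst (pos q)) ` {q. q < 2*m \<and> snd (pos q) = j \<and> lab_g \<sigma> X q \<noteq> 0}. F \<sigma> X i j)"
    using col_img[of "\<lambda>x. x \<noteq> 0"] by simp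
  also have "\<dots> = (\<Sum>q\<in>{q. q < 2*m \<and> snd (pos q) = j \<and> lab_g \<sigma> X q \<noteq> 0}. F \<sigma> X (fst (pos q)) j)"
    by (rule sum.reindex[OF fst_pos_inj, unfolded comp_def])
  also have "\<dots> = (\<Sum>q\<in>{q. q < 2*m \<and> snd (pos q) = j}. lab_g \<sigma> X q)"
    using lab_g_nz[OF assms] F_pos by (intro sum.cong) auto
  finally show ?thesis .
qed

lemma row_card_gen:
  assumes "\<not> P 0"
  shows "card {j. j < 2*m \<and> P (F \<sigma> X i j)} = card {q \<in> {q. q < 2*m \<and> fst (pos q) = i}. P (lab_g \<sigma> X q)}"
proof -
  have "{q. q < 2*m \<and> fst (pos q) = i \<and> P (lab_g \<sigma> X q)} = {q \<in> {q. q < 2*m \<and> fst (pos q) = i}. P (lab_g \<sigma> X q)}" by blast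
  thus ?thesis unfolding row_img[of P, OF assms] using card_image[OF snd_pos_inj] by metis
qed

lemma col_card_gen:
  assumes "\<not> P 0"
  shows "card {i. i < 2*m \<and> P (F \<sigma> X i j)} = card {q \<in> {q. q < 2*m \<and> snd (pos q) = j}. P (lab_g \<sigma> X q)}"
proof -
  have "{q. q < 2*m \<and> snd (pos q) = j \<and> P (lab_g \<sigma> X q)} = {q \<in> {q. q < 2*m \<and> snd (pos q) = j}. P (lab_g \<sigma> X q)}" by blast
  thus ?thesis unfolding col_img[of P, OF assms] using card_image[OF fst_pos_inj] by metis
qed

lemma row_sum:
  assumes "\<sigma> \<noteq> 0" "X \<ge> 0"
  shows "(\<Sum>j<2*m. F \<sigma> X i j) = (if i \<in> r ` {..<m} then \<sigma> * (if i = r 0 then 1 - 2 * int m else 1) else 0)"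
proof (cases "i \<in> r ` {..<m}")
  case False thus ?thesis using row_sum_gen[OF assms, of i] rowset_empty[OF False] by simp
next
  case True
  then obtain k where k: "k < m" "i = r k" by auto
  have e: "(i = r 0) = (k = 0)" using k ir m2 by (auto dest: inj_onD)
  show ?thesis
  proof (cases "k = 0")
    case True
    have "(\<Sum>j<2*m. F \<sigma> X i j) = lab_g \<sigma> X 0 + lab_g \<sigma> X (2*m - 1)"
      using row_sum_gen[OF assms, of i] rowset[OF k(1)] True k m2 by simp
    also have "\<dots> = \<sigma> * (1 - 2 * int m)" using m2 by (simp add: lab_g_def of_nat_diff algebra_simps)
    finally show ?thesis using k e True by auto
  next
    case False
    have "(\<Sum>j<2*m. F \<sigma> X i j) = lab_g \<sigma> X (2*k) + lab_g \<sigma> X (2*k - 1)"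
      using row_sum_gen[OF assms, of i] rowset[OF k(1)] False k by simp
    also have "\<dots> = \<sigma>" using False by (simp add: lab_g_def of_nat_diff algebra_simps)
    finally show ?thesis using k e False by auto
  qed
qed

lemma col_sum:
  assumes "\<sigma> \<noteq> 0" "X \<ge> 0"
  shows "(\<Sum>i<2*m. F \<sigma> X i j) = (if j \<in> c ` {..<m} then - \<sigma> else 0)"
proof (cases "j \<in> c ` {..<m}")
  case False thus ?thesis using col_sum_gen[OF assms, of j] colset_empty[OF False] by simp
next
  case True
  then obtain k where k: "k < m" "j = c k" by auto
  have "(\<Sum>i<2*m. F \<sigma> X i j) = lab_g \<sigma> X (2*k) + lab_g \<sigma> X (2*k+1)"
    using col_sum_gen[OF assms, of j] colset[OF k(1)] k by simp
  also have "\<dots> = - \<sigma>" by (simp add: lab_g_def algebra_simps)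
  finally show ?thesis using k by auto
qed

lemma row_card:
  assumes "\<sigma> = 1 \<or> \<sigma> = -1" "X \<ge> 0"
  shows "card {j. j < 2*m \<and> F \<sigma> X i j > 0} = (if i \<in> r ` {..<m} then 1 else 0)"
    and "card {j. j < 2*m \<and> F \<sigma> X i j < 0} = (if i \<in> r ` {..<m} then 1 else 0)"
proof -
  have "card {j. j < 2*m \<and> F \<sigma> X i j > 0} = (if i \<in> r ` {..<m} then 1 else 0) \<and>
        card {j. j < 2*m \<and> F \<sigma> X i j < 0} = (if i \<in> r ` {..<m} then 1 else 0)"
  proof (cases "i \<in> r ` {..<m}")
    case False thus ?thesis using row_card_gen[of "\<lambda>x. x > 0" \<sigma> X i] row_card_gen[of "\<lambda>x. x < 0" \<sigma> X i] rowset_empty[OF False] by simp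
  next
    case True
    then obtain k where k: "k < m" "i = r k" by auto
    have ev: "even (2*k)" "odd (if k = 0 then 2*m - 1 else 2*k - 1)" using m2 by auto
    show ?thesis using row_card_gen[of "\<lambda>x. x > 0" \<sigma> X i] row_card_gen[of "\<lambda>x. x < 0" \<sigma> X i] rowset[OF k(1)]
      card_pair_sign[OF ev assms] k True by simp
  qed
  thus "card {j. j < 2*m \<and> F \<sigma> X i j > 0} = (if i \<in> r ` {..<m} then 1 else 0)"
    "card {j. j < 2*m \<and> F \<sigma> X i j < 0} = (if i \<in> r ` {..<m} then 1 else 0)" by auto
qed

lemma col_card:
  assumes "\<sigma> = 1 \<or> \<sigma> = -1" "X \<ge> 0"
  shows "card {i. i < 2*m \<and> F \<sigma> X i j > 0} = (if j \<in> c ` {..<m} then 1 else 0)"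
    and "card {i. i < 2*m \<and> F \<sigma> X i j < 0} = (if j \<in> c ` {..<m} then 1 else 0)"
proof -
  have "card {i. i < 2*m \<and> F \<sigma> X i j > 0} = (if j \<in> c ` {..<m} then 1 else 0) \<and>
        card {i. i < 2*m \<and> F \<sigma> X i j < 0} = (if j \<in> c ` {..<m} then 1 else 0)"
  proof (cases "j \<in> c ` {..<m}")
    case False thus ?thesis using col_card_gen[of "\<lambda>x. x > 0" \<sigma> X j] col_card_gen[of "\<lambda>x. x < 0" \<sigma> X j] colset_empty[OF False] by simp
  next
    case True
    then obtain k where k: "k < m" "j = c k" by auto
    have ev: "even (2*k)" "odd (2*k+1)" by auto
    show ?thesis using col_card_gen[of "\<lambda>x. x > 0" \<sigma> X j] col_card_gen[of "\<lambda>x. x < 0" \<sigma> X j] colset[OF k(1)]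
      card_pair_sign[OF ev assms] k True by simp
  qed
  thus "card {i. i < 2*m \<and> F \<sigma> X i j > 0} = (if j \<in> c ` {..<m} then 1 else 0)"
    "card {i. i < 2*m \<and> F \<sigma> X i j < 0} = (if j \<in> c ` {..<m} then 1 else 0)" by auto
qed

lemma row_cells: "card {j. (i, j) \<in> pos ` {..<2*m}} = (if i \<in> r ` {..<m} then 2 else 0)"
proof -
  have "{j. (i, j) \<in> pos ` {..<2*m}} = (\<lambda>q. snd (pos q)) ` {q. q < 2*m \<and> fst (pos q) = i \<and> True}"
    by (auto simp: image_iff) (metis fst_conv snd_conv)
  hence "card {j. (i, j) \<in> pos ` {..<2*m}} = card {q. q < 2*m \<and> fst (pos q) = i}"
    using card_image[OF snd_pos_inj[of i "\<lambda>_. True"]] by simp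
  thus ?thesis using rowset rowset_empty m2 by (auto split: if_splits)
qed

lemma col_cells: "card {i. (i, j) \<in> pos ` {..<2*m}} = (if j \<in> c ` {..<m} then 2 else 0)"
proof -
  have "{i. (i, j) \<in> pos ` {..<2*m}} = (\<lambda>q. fst (pos q)) ` {q. q < 2*m \<and> snd (pos q) = j \<and> True}"
    by (auto simp: image_iff) (metis fst_conv snd_conv)
  hence "card {i. (i, j) \<in> pos ` {..<2*m}} = card {q. q < 2*m \<and> snd (pos q) = j}"
    using card_image[OF fst_pos_inj[of j "\<lambda>_. True"]] by simp
  thus ?thesis using colset colset_empty by (auto split: if_splits)
qed

lemma F_bij:
  assumes "\<sigma> = 1 \<or> \<sigma> = -1" "X \<ge> 0"
  shows "bij_betw (\<lambda>(i, j). \<bar>F \<sigma> X i j\<bar>) (pos ` {..<2*m}) ((\<lambda>i. X + int i) ` {1..2*m})"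
proof -
  have b1: "bij_betw pos {..<2*m} (pos ` {..<2*m})" using pos_inj by (simp add: bij_betw_def)
  have "bij_betw (\<lambda>q. X + int q + 1) {..<2*m} ((\<lambda>i. X + int i) ` {1..2*m})"
  proof (rule bij_betw_imageI)
    show "inj_on (\<lambda>q. X + int q + 1) {..<2*m}" by (auto simp: inj_on_def)
    have "(\<lambda>i. X + int i) ` {1..2*m} = (\<lambda>i. X + int i) ` (Suc ` {..<2*m})"
      by (simp add: atLeastLessThanSuc_atLeastAtMost[symmetric] lessThan_atLeast0 image_Suc_atLeastLessThan)
    thus "(\<lambda>q. X + int q + 1) ` {..<2*m} = (\<lambda>i. X + int i) ` {1..2*m}" by (simp add: image_image algebra_simps)
  qed
  moreover have "\<forall>q\<in>{..<2*m}. ((\<lambda>(i, j). \<bar>F \<sigma> X i j\<bar>) \<circ> pos) q = X + int q + 1"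
  proof
    fix q assume "q \<in> {..<2*m}"
    hence "F \<sigma> X (fst (pos q)) (snd (pos q)) = lab_g \<sigma> X q" using F_pos by simp
    moreover have "\<bar>lab_g \<sigma> X q\<bar> = X + int q + 1" using assms by (auto simp: lab_g_def abs_mult)
    ultimately show "((\<lambda>(i, j). \<bar>F \<sigma> X i j\<bar>) \<circ> pos) q = X + int q + 1" by (simp add: case_prod_beta)
  qed
  ultimately have "bij_betw ((\<lambda>(i, j). \<bar>F \<sigma> X i j\<bar>) \<circ> pos) {..<2*m} ((\<lambda>i. X + int i) ` {1..2*m})"
    using bij_betw_cong by (metis (no_types, lifting))
  thus ?thesis using bij_betw_comp_iff[OF b1] by blast
qed

end


lemma phi_eq: "(k::nat) < m \<Longrightarrow> k0 < m \<Longrightarrow> (k + k0) mod m = (if k + k0 < m then k + k0 else k + k0 - m)"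
  by (simp add: le_mod_geq)

lemma phi_inj: "(k0::nat) < m \<Longrightarrow> inj_on (\<lambda>k. (k + k0) mod m) {..<m}"
proof (rule inj_onI)
  fix x y assume "k0 < m" "x \<in> {..<m}" "y \<in> {..<m}" "(x + k0) mod m = (y + k0) mod m"
  thus "x = y" using phi_eq[of x m k0] phi_eq[of y m k0] by (auto split: if_splits)
qed

lemma phi_img: assumes "(k0::nat) < m" shows "(\<lambda>k. (k + k0) mod m) ` {..<m} = {..<m}"
proof (rule endo_inj_surj)
  have "0 < m" using assms by simp
  thus "(\<lambda>k. (k + k0) mod m) ` {..<m} \<subseteq> {..<m}" by auto
qed (use assms phi_inj in auto)

lemma phi_suc: "(Suc k mod m + (k0::nat)) mod m = Suc ((k + k0) mod m) mod m"
proof -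
  have "(Suc k mod m + k0) mod m = (Suc k + k0) mod m" by (rule mod_add_left_eq)
  also have "\<dots> = Suc (k + k0) mod m" by simp
  also have "\<dots> = Suc ((k + k0) mod m) mod m" by (rule mod_Suc_eq[symmetric])
  finally show ?thesis .
qed

lemma rot:
  assumes "bip_cycle n L C" "x \<in> fst ` C"
  shows "\<exists>m r c. L = 2 * m \<and> 2 \<le> m
     \<and> inj_on r {..<m} \<and> inj_on c {..<m}
     \<and> r ` {..<m} \<subseteq> {..<n} \<and> c ` {..<m} \<subseteq> {..<n}
     \<and> C = (\<lambda>k. (r k, c k)) ` {..<m} \<union> (\<lambda>k. (r (Suc k mod m), c k)) ` {..<m} \<and> r 0 = x"
proof -
  obtain m r c where h: "L = 2 * m" "2 \<le> m" "inj_on r {..<m}" "inj_on c {..<m}"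
     "r ` {..<m} \<subseteq> {..<n}" "c ` {..<m} \<subseteq> {..<n}"
     "C = {(r k, c k) | k. k < m} \<union> {(r (Suc k mod m), c k) | k. k < m}"
    using assms(1) unfolding bip_cycle_def by blast
  have C: "C = (\<lambda>k. (r k, c k)) ` {..<m} \<union> (\<lambda>k. (r (Suc k mod m), c k)) ` {..<m}"
    using h(7) by auto
  obtain k0 where k0: "k0 < m" "x = r k0"
  proof -
    from assms(2) obtain y where "(x, y) \<in> C" by force
    then consider k where "k < m" "x = r k" | k where "k < m" "x = r (Suc k mod m)" using C by auto
    thus ?thesis
    proof cases
      case 1 thus ?thesis using that by blast
    next
      case 2 thus ?thesis using that[of "Suc k mod m"] h(2) by auto
    qed
  qed
  define \<phi> where "\<phi> k = (k + k0) mod m" for k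
  have pim: "\<phi> ` {..<m} = {..<m}" using phi_img[OF k0(1)] by (simp add: \<phi>_def[abs_def])
  have pinj: "inj_on \<phi> {..<m}" using phi_inj[OF k0(1)] by (simp add: \<phi>_def[abs_def])
  define r' where "r' k = r (\<phi> k)" for k
  define c' where "c' k = c (\<phi> k)" for k
  have i1: "inj_on r' {..<m}" unfolding r'_def[abs_def]
    using comp_inj_on[OF pinj, of r] pim h(3) by (simp add: comp_def)
  have i2: "inj_on c' {..<m}" unfolding c'_def[abs_def]
    using comp_inj_on[OF pinj, of c] pim h(4) by (simp add: comp_def)
  have i3: "r' ` {..<m} \<subseteq> {..<n}" "c' ` {..<m} \<subseteq> {..<n}"
    using h(5,6) pim unfolding r'_def c'_def by (auto simp: image_subset_iff)
  have i4: "(\<lambda>k. (r' k, c' k)) ` {..<m} = (\<lambda>k. (r k, c k)) ` {..<m}"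
  proof -
    have "(\<lambda>k. (r' k, c' k)) ` {..<m} = (\<lambda>k. (r k, c k)) ` \<phi> ` {..<m}"
      unfolding r'_def c'_def by (simp add: image_image)
    thus ?thesis using pim by simp
  qed
  have i5: "(\<lambda>k. (r' (Suc k mod m), c' k)) ` {..<m} = (\<lambda>k. (r (Suc k mod m), c k)) ` {..<m}"
  proof -
    have "(\<lambda>k. (r' (Suc k mod m), c' k)) ` {..<m} = (\<lambda>k. (r (Suc k mod m), c k)) ` \<phi> ` {..<m}"
      unfolding r'_def c'_def image_image by (simp add: \<phi>_def phi_suc)
    thus ?thesis using pim by simp
  qed
  have i6: "r' 0 = x" using k0 by (simp add: r'_def \<phi>_def)
  show ?thesis
    apply (rule exI[of _ m], rule exI[of _ r'], rule exI[of _ c'])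
    using h(1,2) i1 i2 i3 i6 C i4 i5 by simp
qed



context cyc begin
lemma C_eq: "(\<lambda>k. (r k, c k)) ` {..<m} \<union> (\<lambda>k. (r (Suc k mod m), c k)) ` {..<m} = pos ` {..<2*m}"
proof
  show "(\<lambda>k. (r k, c k)) ` {..<m} \<union> (\<lambda>k. (r (Suc k mod m), c k)) ` {..<m} \<subseteq> pos ` {..<2*m}"
  proof
    fix z assume "z \<in> (\<lambda>k. (r k, c k)) ` {..<m} \<union> (\<lambda>k. (r (Suc k mod m), c k)) ` {..<m}"
    then consider k where "k < m" "z = (r k, c k)" | k where "k < m" "z = (r (Suc k mod m), c k)" by auto
    thus "z \<in> pos ` {..<2*m}"
    proof cases
      case 1
      hence "z = pos (2*k)" "2*k < 2*m" by (auto simp: pos_def)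
      thus ?thesis by blast
    next
      case 2
      hence "z = pos (2*k+1)" "2*k+1 < 2*m" by (auto simp: pos_def)
      thus ?thesis by blast
    qed
  qed
  show "pos ` {..<2*m} \<subseteq> (\<lambda>k. (r k, c k)) ` {..<m} \<union> (\<lambda>k. (r (Suc k mod m), c k)) ` {..<m}"
  proof
    fix z assume "z \<in> pos ` {..<2*m}"
    then obtain q where q: "q < 2*m" "z = pos q" by auto
    hence d: "q div 2 < m" by auto
    show "z \<in> (\<lambda>k. (r k, c k)) ` {..<m} \<union> (\<lambda>k. (r (Suc k mod m), c k)) ` {..<m}"
    proof (cases "even q")
      case True thus ?thesis using q d by (auto simp: pos_def)
    next
      case False thus ?thesis using q d by (auto simp: pos_def)
    qed
  qed
qed
end

lemma cycle_rep:
  assumes "bip_cycle n n C" "x \<in> fst ` C"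
  obtains m r c where "cyc m r c" "n = 2 * m" "C = cyc.pos m r c ` {..<2*m}" "r 0 = x"
    "fst ` C = r ` {..<m}" "snd ` C = c ` {..<m}"
proof -
  obtain m r c where h: "n = 2 * m" "2 \<le> m" "inj_on r {..<m}" "inj_on c {..<m}"
     "r ` {..<m} \<subseteq> {..<n}" "c ` {..<m} \<subseteq> {..<n}"
     "C = (\<lambda>k. (r k, c k)) ` {..<m} \<union> (\<lambda>k. (r (Suc k mod m), c k)) ` {..<m}" "r 0 = x"
    using rot[OF assms] by blast
  have cy: "cyc m r c" using h by (unfold_locales) auto
  have C: "C = cyc.pos m r c ` {..<2*m}" using h(7) cyc.C_eq[OF cy] by simp
  show ?thesis using that[OF cy h(1) C h(8)] C cyc.fst_img[OF cy] cyc.snd_img[OF cy] by simp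
qed

lemma cycle_struct:
  assumes "bip_cycle n n C"
  shows "C \<subseteq> {..<n} \<times> {..<n}" "finite C" "2 * card (fst ` C) = n"
    "\<And>i. card {j. (i, j) \<in> C} = (if i \<in> fst ` C then 2 else 0)"
    "\<And>j. card {i. (i, j) \<in> C} = (if j \<in> snd ` C then 2 else 0)"
    "fst ` C \<noteq> {}"
proof -
  obtain m r c where h: "n = 2 * m" "2 \<le> m" "inj_on r {..<m}" "inj_on c {..<m}"
     "r ` {..<m} \<subseteq> {..<n}" "c ` {..<m} \<subseteq> {..<n}"
     "C = {(r k, c k) | k. k < m} \<union> {(r (Suc k mod m), c k) | k. k < m}"
    using assms(1) unfolding bip_cycle_def by blast
  have r0: "r 0 \<in> fst ` C" using h(2,7) by force
  then obtain m r c where cy: "cyc m r c" "n = 2 * m" "C = cyc.pos m r c ` {..<2*m}"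
    "fst ` C = r ` {..<m}" "snd ` C = c ` {..<m}"
    using cycle_rep[OF assms r0] by metis
  interpret cyc m r c by (rule cy(1))
  show "finite C" using cy by simp
  show "C \<subseteq> {..<n} \<times> {..<n}"
  proof
    fix z assume "z \<in> C"
    then obtain q where "q < 2*m" "z = pos q" using cy by auto
    thus "z \<in> {..<n} \<times> {..<n}" using pos_lt[of q] cy by (simp add: mem_Times_iff)
  qed
  show "2 * card (fst ` C) = n" using cy card_image[OF ir] by simp
  show "\<And>i. card {j. (i, j) \<in> C} = (if i \<in> fst ` C then 2 else 0)" using cy row_cells by simp
  show "\<And>j. card {i. (i, j) \<in> C} = (if j \<in> snd ` C then 2 else 0)" using cy col_cells by simp
  show "fst ` C \<noteq> {}" using r0 by auto
qed

lemma cycle_fill: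
  assumes "bip_cycle n n C" "x \<in> fst ` C" "\<sigma> = 1 \<or> \<sigma> = -1" "X \<ge> 0"
  shows "\<exists>F. (\<forall>i j. (i, j) \<notin> C \<longrightarrow> F i j = 0) \<and> (\<forall>i j. (i, j) \<in> C \<longrightarrow> F i j \<noteq> 0)
    \<and> bij_betw (\<lambda>(i, j). \<bar>F i j\<bar>) C ((\<lambda>i. X + int i) ` {1..n})
    \<and> (\<forall>i. (\<Sum>j<n. F i j) = (if i \<in> fst ` C then \<sigma> * (if i = x then 1 - int n else 1) else 0))
    \<and> (\<forall>j. (\<Sum>i<n. F i j) = (if j \<in> snd ` C then - \<sigma> else 0))
    \<and> (\<forall>i. card {j. j < n \<and> F i j > 0} = (if i \<in> fst ` C then 1 else 0))
    \<and> (\<forall>i. card {j. j < n \<and> F i j < 0} = (if i \<in> fst ` C then 1 else 0))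
    \<and> (\<forall>j. card {i. i < n \<and> F i j > 0} = (if j \<in> snd ` C then 1 else 0))
    \<and> (\<forall>j. card {i. i < n \<and> F i j < 0} = (if j \<in> snd ` C then 1 else 0))"
proof -
  obtain m r c where cy: "cyc m r c" "n = 2 * m" "C = cyc.pos m r c ` {..<2*m}" "r 0 = x"
    "fst ` C = r ` {..<m}" "snd ` C = c ` {..<m}"
    using cycle_rep[OF assms(1,2)] by metis
  interpret cyc m r c by (rule cy(1))
  have s0: "\<sigma> \<noteq> 0" using assms(3) by auto
  show ?thesis
  proof (rule exI[of _ "F \<sigma> X"], intro conjI allI impI)
    show "\<And>i j. (i, j) \<notin> C \<Longrightarrow> F \<sigma> X i j = 0" using cy F_out by simp
    show "\<And>i j. (i, j) \<in> C \<Longrightarrow> F \<sigma> X i j \<noteq> 0" using cy F_in s0 assms(4) by simp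
    show "bij_betw (\<lambda>(i, j). \<bar>F \<sigma> X i j\<bar>) C ((\<lambda>i. X + int i) ` {1..n})" using cy F_bij assms(3,4) by simp
    show "\<And>i. (\<Sum>j<n. F \<sigma> X i j) = (if i \<in> fst ` C then \<sigma> * (if i = x then 1 - int n else 1) else 0)"
      using cy row_sum[OF s0 assms(4)] by simp
    show "\<And>j. (\<Sum>i<n. F \<sigma> X i j) = (if j \<in> snd ` C then - \<sigma> else 0)"
      using cy col_sum[OF s0 assms(4)] by simp
    show "\<And>i. card {j. j < n \<and> F \<sigma> X i j > 0} = (if i \<in> fst ` C then 1 else 0)"
      using cy row_card[OF assms(3,4)] by simp
    show "\<And>i. card {j. j < n \<and> F \<sigma> X i j < 0} = (if i \<in> fst ` C then 1 else 0)"
      using cy row_card[OF assms(3,4)] by simp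
    show "\<And>j. card {i. i < n \<and> F \<sigma> X i j > 0} = (if j \<in> snd ` C then 1 else 0)"
      using cy col_card[OF assms(3,4)] by simp
    show "\<And>j. card {i. i < n \<and> F \<sigma> X i j < 0} = (if j \<in> snd ` C then 1 else 0)"
      using cy col_card[OF assms(3,4)] by simp
  qed
qed



lemma card4:
  assumes "finite A" "finite B" "finite C" "finite D"
    "A \<inter> B = {}" "A \<inter> C = {}" "A \<inter> D = {}" "B \<inter> C = {}" "B \<inter> D = {}" "C \<inter> D = {}"
  shows "card (A \<union> B \<union> C \<union> D) = card A + card B + card C + card D"
proof -
  have "card (A \<union> B) = card A + card B" using assms by (simp add: card_Un_disjoint)
  moreover have "card (A \<union> B \<union> C) = card (A \<union> B) + card C" using assms by (intro card_Un_disjoint) auto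
  moreover have "card (A \<union> B \<union> C \<union> D) = card (A \<union> B \<union> C) + card D" using assms by (intro card_Un_disjoint) auto
  ultimately show ?thesis by simp
qed

lemma count_split:
  fixes f1 f2 f3 f4 :: "nat \<Rightarrow> int"
  assumes "\<not> P 0"
    and d1: "\<forall>j. f1 j \<noteq> 0 \<longrightarrow> f2 j = 0 \<and> f3 j = 0 \<and> f4 j = 0"
    and d2: "\<forall>j. f2 j \<noteq> 0 \<longrightarrow> f3 j = 0 \<and> f4 j = 0"
    and d3: "\<forall>j. f3 j \<noteq> 0 \<longrightarrow> f4 j = 0"
  shows "card {j. j < n \<and> P (f1 j + f2 j + f3 j + f4 j)} =
     card {j. j < n \<and> P (f1 j)} + card {j. j < n \<and> P (f2 j)} + card {j. j < n \<and> P (f3 j)} + card {j. j < n \<and> P (f4 j)}"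
proof -
  have "{j. j < n \<and> P (f1 j + f2 j + f3 j + f4 j)} =
     {j. j < n \<and> P (f1 j)} \<union> {j. j < n \<and> P (f2 j)} \<union> {j. j < n \<and> P (f3 j)} \<union> {j. j < n \<and> P (f4 j)}"
  proof (rule set_eqI)
    fix j
    show "j \<in> {j. j < n \<and> P (f1 j + f2 j + f3 j + f4 j)} \<longleftrightarrow>
      j \<in> {j. j < n \<and> P (f1 j)} \<union> {j. j < n \<and> P (f2 j)} \<union> {j. j < n \<and> P (f3 j)} \<union> {j. j < n \<and> P (f4 j)}"
    proof (cases "f1 j \<noteq> 0")
      case True thus ?thesis using d1 assms(1) by auto
    next
      case F1: False
      show ?thesis
      proof (cases "f2 j \<noteq> 0")
        case True thus ?thesis using F1 d2 assms(1) by auto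
      next
        case F2: False
        show ?thesis
        proof (cases "f3 j \<noteq> 0")
          case True thus ?thesis using F1 F2 d3 assms(1) by auto
        next
          case False thus ?thesis using F1 F2 assms(1) by auto
        qed
      qed
    qed
  qed
  moreover have "card (\<dots>) = card {j. j < n \<and> P (f1 j)} + card {j. j < n \<and> P (f2 j)} + card {j. j < n \<and> P (f3 j)} + card {j. j < n \<and> P (f4 j)}"
    apply (rule card4)
    using d1 d2 d3 assms(1) by (auto, metis+)
  ultimately show ?thesis by simp
qed

lemma choose_specials:
  assumes "finite U" "R1 \<union> R2 = U" "R1 \<inter> R2 = {}" "Q1 \<union> Q2 = U" "Q1 \<inter> Q2 = {}"
    "card R1 = k" "card R2 = k" "card Q1 = k" "card Q2 = k" "R1 \<noteq> {}"
  shows "(R1 \<inter> Q1 \<noteq> {} \<and> R2 \<inter> Q2 \<noteq> {}) \<or> (R1 \<inter> Q2 \<noteq> {} \<and> R2 \<inter> Q1 \<noteq> {})"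
proof -
  have fin: "finite R1" "finite R2" "finite Q1" "finite Q2" using assms by auto
  have a: "card R1 = card (R1 \<inter> Q1) + card (R1 \<inter> Q2)"
    using assms fin by (metis Int_Un_distrib card_Un_disjoint finite_Int inf.absorb_iff1 inf_commute inf_sup_aci(2) Un_upper1 Int_assoc inf_bot_right)
  have b: "card Q2 = card (R1 \<inter> Q2) + card (R2 \<inter> Q2)"
    using assms fin by (metis Int_Un_distrib2 card_Un_disjoint finite_Int inf.absorb_iff1 inf_sup_aci(1) Un_upper2 Int_assoc inf_bot_left inf_left_commute)
  have c: "card Q1 = card (R1 \<inter> Q1) + card (R2 \<inter> Q1)"
    using assms fin by (metis Int_Un_distrib2 card_Un_disjoint finite_Int inf.absorb_iff1 inf_sup_aci(1) Un_upper1 Int_assoc inf_bot_left inf_left_commute)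
  have "card R1 > 0" using assms fin by auto
  thus ?thesis using a b c assms(6-9) fin by (metis add.commute add_cancel_right_left card.empty gr_implies_not0 finite_Int)
qed



lemma partition_rows:
  assumes "two_factor n S" "S = C1 \<union> C2" "C1 \<inter> C2 = {}" "bip_cycle n n C1" "bip_cycle n n C2" "i < n"
  shows "(i \<in> fst ` C1) \<noteq> (i \<in> fst ` C2)"
proof -
  have "{j. (i, j) \<in> S} = {j. (i, j) \<in> C1} \<union> {j. (i, j) \<in> C2}" using assms(2) by auto
  moreover have "finite {j. (i, j) \<in> C1}" "finite {j. (i, j) \<in> C2}"
    using cycle_struct(1)[OF assms(4)] cycle_struct(1)[OF assms(5)]
    by (auto intro: finite_subset[of _ "{..<n}"])
  moreover have "{j. (i, j) \<in> C1} \<inter> {j. (i, j) \<in> C2} = {}" using assms(3) by auto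
  ultimately have "card {j. (i, j) \<in> S} = card {j. (i, j) \<in> C1} + card {j. (i, j) \<in> C2}"
    by (simp add: card_Un_disjoint)
  moreover have "card {j. (i, j) \<in> S} = 2" using assms(1,6) unfolding two_factor_def by blast
  ultimately show ?thesis using cycle_struct(4)[OF assms(4)] cycle_struct(4)[OF assms(5)]
    by (auto split: if_splits)
qed

lemma partition_cols:
  assumes "two_factor n S" "S = C1 \<union> C2" "C1 \<inter> C2 = {}" "bip_cycle n n C1" "bip_cycle n n C2" "j < n"
  shows "(j \<in> snd ` C1) \<noteq> (j \<in> snd ` C2)"
proof -
  have "{i. (i, j) \<in> S} = {i. (i, j) \<in> C1} \<union> {i. (i, j) \<in> C2}" using assms(2) by auto
  moreover have "finite {i. (i, j) \<in> C1}" "finite {i. (i, j) \<in> C2}"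
    using cycle_struct(1)[OF assms(4)] cycle_struct(1)[OF assms(5)]
    by (auto intro: finite_subset[of _ "{..<n}"])
  moreover have "{i. (i, j) \<in> C1} \<inter> {i. (i, j) \<in> C2} = {}" using assms(3) by auto
  ultimately have "card {i. (i, j) \<in> S} = card {i. (i, j) \<in> C1} + card {i. (i, j) \<in> C2}"
    by (simp add: card_Un_disjoint)
  moreover have "card {i. (i, j) \<in> S} = 2" using assms(1,6) unfolding two_factor_def by blast
  ultimately show ?thesis using cycle_struct(5)[OF assms(4)] cycle_struct(5)[OF assms(5)]
    by (auto split: if_splits)
qed


lemma assemble:
  fixes X1 X2 X3 X4 :: int
  assumes c1: "bip_cycle n n C1" and c2: "bip_cycle n n C2" and d1: "bip_cycle n n D1" and d2: "bip_cycle n n D2"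
    and pR: "\<forall>i<n. (i \<in> fst ` C1) \<noteq> (i \<in> fst ` C2)" and pQ: "\<forall>i<n. (i \<in> fst ` D1) \<noteq> (i \<in> fst ` D2)"
    and pK: "\<forall>j<n. (j \<in> snd ` C1) \<noteq> (j \<in> snd ` C2)" and pL: "\<forall>j<n. (j \<in> snd ` D1) \<noteq> (j \<in> snd ` D2)"
    and dC: "C1 \<inter> C2 = {}" and dD: "D1 \<inter> D2 = {}" and dCD: "(C1 \<union> C2) \<inter> (D1 \<union> D2) = {}"
    and x: "x \<in> fst ` C1" "x \<in> fst ` D1" and y: "y \<in> fst ` C2" "y \<in> fst ` D2"
    and X: "X1 \<ge> 0" "X2 \<ge> 0" "X3 \<ge> 0" "X4 \<ge> 0"
    and V: "(\<lambda>i. X1 + int i) ` {1..n} \<inter> (\<lambda>i. X2 + int i) ` {1..n} = {}"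
      "((\<lambda>i. X1 + int i) ` {1..n} \<union> (\<lambda>i. X2 + int i) ` {1..n}) \<inter> (\<lambda>i. X3 + int i) ` {1..n} = {}"
      "((\<lambda>i. X1 + int i) ` {1..n} \<union> (\<lambda>i. X2 + int i) ` {1..n} \<union> (\<lambda>i. X3 + int i) ` {1..n}) \<inter> (\<lambda>i. X4 + int i) ` {1..n} = {}"
  shows "\<exists>A :: nat \<Rightarrow> nat \<Rightarrow> int.
     (\<forall>i j. (i, j) \<in> C1 \<union> C2 \<union> D1 \<union> D2 \<longrightarrow> A i j \<noteq> 0)
   \<and> (\<forall>i j. (i, j) \<notin> C1 \<union> C2 \<union> D1 \<union> D2 \<longrightarrow> A i j = 0)
   \<and> shiftable n A
   \<and> bij_betw (\<lambda>(i, j). \<bar>A i j\<bar>) (C1 \<union> C2 \<union> D1 \<union> D2)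
       ((\<lambda>i. X1 + int i) ` {1..n} \<union> (\<lambda>i. X2 + int i) ` {1..n}
        \<union> (\<lambda>i. X3 + int i) ` {1..n} \<union> (\<lambda>i. X4 + int i) ` {1..n})
   \<and> (\<forall>i<n. (\<Sum>j<n. A i j) = 0)
   \<and> (\<forall>j<n. (\<Sum>i<n. A i j) = 0)"
proof -
  have s1: "(1::int) = 1 \<or> (1::int) = -1" and s2: "(-1::int) = 1 \<or> (-1::int) = -1" by auto
  obtain F1 where F1: "(\<forall>i j. (i, j) \<notin> C1 \<longrightarrow> F1 i j = 0)" "(\<forall>i j. (i, j) \<in> C1 \<longrightarrow> F1 i j \<noteq> 0)"
    "bij_betw (\<lambda>(i, j). \<bar>F1 i j\<bar>) C1 ((\<lambda>i. X1 + int i) ` {1..n})"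
    "(\<forall>i. (\<Sum>j<n. F1 i j) = (if i \<in> fst ` C1 then 1 * (if i = x then 1 - int n else 1) else 0))"
    "(\<forall>j. (\<Sum>i<n. F1 i j) = (if j \<in> snd ` C1 then - 1 else 0))"
    "(\<forall>i. card {j. j < n \<and> F1 i j > 0} = (if i \<in> fst ` C1 then 1 else 0))"
    "(\<forall>i. card {j. j < n \<and> F1 i j < 0} = (if i \<in> fst ` C1 then 1 else 0))"
    "(\<forall>j. card {i. i < n \<and> F1 i j > 0} = (if j \<in> snd ` C1 then 1 else 0))"
    "(\<forall>j. card {i. i < n \<and> F1 i j < 0} = (if j \<in> snd ` C1 then 1 else 0))"
    using cycle_fill[OF c1 x(1) s1 X(1)] by blast
  obtain F2 where F2: "(\<forall>i j. (i, j) \<notin> C2 \<longrightarrow> F2 i j = 0)" "(\<forall>i j. (i, j) \<in> C2 \<longrightarrow> F2 i j \<noteq> 0)"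
    "bij_betw (\<lambda>(i, j). \<bar>F2 i j\<bar>) C2 ((\<lambda>i. X2 + int i) ` {1..n})"
    "(\<forall>i. (\<Sum>j<n. F2 i j) = (if i \<in> fst ` C2 then 1 * (if i = y then 1 - int n else 1) else 0))"
    "(\<forall>j. (\<Sum>i<n. F2 i j) = (if j \<in> snd ` C2 then - 1 else 0))"
    "(\<forall>i. card {j. j < n \<and> F2 i j > 0} = (if i \<in> fst ` C2 then 1 else 0))"
    "(\<forall>i. card {j. j < n \<and> F2 i j < 0} = (if i \<in> fst ` C2 then 1 else 0))"
    "(\<forall>j. card {i. i < n \<and> F2 i j > 0} = (if j \<in> snd ` C2 then 1 else 0))"
    "(\<forall>j. card {i. i < n \<and> F2 i j < 0} = (if j \<in> snd ` C2 then 1 else 0))"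
    using cycle_fill[OF c2 y(1) s1 X(2)] by blast
  obtain G1 where G1: "(\<forall>i j. (i, j) \<notin> D1 \<longrightarrow> G1 i j = 0)" "(\<forall>i j. (i, j) \<in> D1 \<longrightarrow> G1 i j \<noteq> 0)"
    "bij_betw (\<lambda>(i, j). \<bar>G1 i j\<bar>) D1 ((\<lambda>i. X3 + int i) ` {1..n})"
    "(\<forall>i. (\<Sum>j<n. G1 i j) = (if i \<in> fst ` D1 then (-1) * (if i = x then 1 - int n else 1) else 0))"
    "(\<forall>j. (\<Sum>i<n. G1 i j) = (if j \<in> snd ` D1 then - (-1) else 0))"
    "(\<forall>i. card {j. j < n \<and> G1 i j > 0} = (if i \<in> fst ` D1 then 1 else 0))"
    "(\<forall>i. card {j. j < n \<and> G1 i j < 0} = (if i \<in> fst ` D1 then 1 else 0))"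
    "(\<forall>j. card {i. i < n \<and> G1 i j > 0} = (if j \<in> snd ` D1 then 1 else 0))"
    "(\<forall>j. card {i. i < n \<and> G1 i j < 0} = (if j \<in> snd ` D1 then 1 else 0))"
    using cycle_fill[OF d1 x(2) s2 X(3)] by blast
  obtain G2 where G2: "(\<forall>i j. (i, j) \<notin> D2 \<longrightarrow> G2 i j = 0)" "(\<forall>i j. (i, j) \<in> D2 \<longrightarrow> G2 i j \<noteq> 0)"
    "bij_betw (\<lambda>(i, j). \<bar>G2 i j\<bar>) D2 ((\<lambda>i. X4 + int i) ` {1..n})"
    "(\<forall>i. (\<Sum>j<n. G2 i j) = (if i \<in> fst ` D2 then (-1) * (if i = y then 1 - int n else 1) else 0))"
    "(\<forall>j. (\<Sum>i<n. G2 i j) = (if j \<in> snd ` D2 then - (-1) else 0))"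
    "(\<forall>i. card {j. j < n \<and> G2 i j > 0} = (if i \<in> fst ` D2 then 1 else 0))"
    "(\<forall>i. card {j. j < n \<and> G2 i j < 0} = (if i \<in> fst ` D2 then 1 else 0))"
    "(\<forall>j. card {i. i < n \<and> G2 i j > 0} = (if j \<in> snd ` D2 then 1 else 0))"
    "(\<forall>j. card {i. i < n \<and> G2 i j < 0} = (if j \<in> snd ` D2 then 1 else 0))"
    using cycle_fill[OF d2 y(2) s2 X(4)] by blast
  define A where "A i j = F1 i j + F2 i j + G1 i j + G2 i j" for i j
  have dis: "\<forall>i j. F1 i j \<noteq> 0 \<longrightarrow> F2 i j = 0 \<and> G1 i j = 0 \<and> G2 i j = 0"
            "\<forall>i j. F2 i j \<noteq> 0 \<longrightarrow> G1 i j = 0 \<and> G2 i j = 0"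
            "\<forall>i j. G1 i j \<noteq> 0 \<longrightarrow> G2 i j = 0"
    using F1(1) F2(1) G1(1) G2(1) dC dD dCD by blast+
  have xn: "x < n" "y < n" using cycle_struct(1)[OF c1] cycle_struct(1)[OF c2] x y by auto
  have xy: "x \<noteq> y" using pR xn x y by auto
  have R: "\<And>i. i \<in> fst ` C1 \<Longrightarrow> i < n" "\<And>i. i \<in> fst ` C2 \<Longrightarrow> i < n"
    using cycle_struct(1)[OF c1] cycle_struct(1)[OF c2] by auto
  show ?thesis
  proof (rule exI[of _ A], intro conjI allI impI)
    fix i j assume "(i, j) \<in> C1 \<union> C2 \<union> D1 \<union> D2"
    then consider "(i, j) \<in> C1" | "(i, j) \<in> C2" | "(i, j) \<in> D1" | "(i, j) \<in> D2" by blast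
    thus "A i j \<noteq> 0"
    proof cases
      case 1
      hence "(i, j) \<notin> C2" "(i, j) \<notin> D1" "(i, j) \<notin> D2" using dC dD dCD by blast+
      thus ?thesis using 1 F1(2) F2(1) G1(1) G2(1) unfolding A_def by simp
    next
      case 2
      hence "(i, j) \<notin> C1" "(i, j) \<notin> D1" "(i, j) \<notin> D2" using dC dD dCD by blast+
      thus ?thesis using 2 F2(2) F1(1) G1(1) G2(1) unfolding A_def by simp
    next
      case 3
      hence "(i, j) \<notin> C1" "(i, j) \<notin> C2" "(i, j) \<notin> D2" using dC dD dCD by blast+
      thus ?thesis using 3 G1(2) F1(1) F2(1) G2(1) unfolding A_def by simp
    next
      case 4
      hence "(i, j) \<notin> C1" "(i, j) \<notin> C2" "(i, j) \<notin> D1" using dC dD dCD by blast+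
      thus ?thesis using 4 G2(2) F1(1) F2(1) G1(1) unfolding A_def by simp
    qed
  next
    fix i j assume "(i, j) \<notin> C1 \<union> C2 \<union> D1 \<union> D2"
    thus "A i j = 0" unfolding A_def using F1(1) F2(1) G1(1) G2(1) by auto
  next
    fix i assume i: "i < n"
    have "(\<Sum>j<n. A i j) = (\<Sum>j<n. F1 i j) + (\<Sum>j<n. F2 i j) + (\<Sum>j<n. G1 i j) + (\<Sum>j<n. G2 i j)"
      unfolding A_def by (simp add: sum.distrib)
    thus "(\<Sum>j<n. A i j) = 0" using F1(4) F2(4) G1(4) G2(4) pR[rule_format, OF i] pQ[rule_format, OF i] x y xy
      by (cases "i = x"; cases "i = y"; auto)
  next
    fix j assume j: "j < n"
    have "(\<Sum>i<n. A i j) = (\<Sum>i<n. F1 i j) + (\<Sum>i<n. F2 i j) + (\<Sum>i<n. G1 i j) + (\<Sum>i<n. G2 i j)"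
      unfolding A_def by (simp add: sum.distrib)
    thus "(\<Sum>i<n. A i j) = 0" using F1(5) F2(5) G1(5) G2(5) pK[rule_format, OF j] pL[rule_format, OF j]
      by auto
  next
    show "shiftable n A"
      unfolding shiftable_def
    proof (intro conjI allI impI)
      fix i assume i: "i < n"
      have a: "card {j. j < n \<and> A i j > 0} = 2"
        unfolding A_def
        using count_split[of "\<lambda>v. v > 0" "\<lambda>j. F1 i j" "\<lambda>j. F2 i j" "\<lambda>j. G1 i j" "\<lambda>j. G2 i j" n] dis
          F1(6) F2(6) G1(6) G2(6) pR[rule_format, OF i] pQ[rule_format, OF i] by auto
      have b: "card {j. j < n \<and> A i j < 0} = 2"
        unfolding A_def
        using count_split[of "\<lambda>v. v < 0" "\<lambda>j. F1 i j" "\<lambda>j. F2 i j" "\<lambda>j. G1 i j" "\<lambda>j. G2 i j" n] dis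
          F1(7) F2(7) G1(7) G2(7) pR[rule_format, OF i] pQ[rule_format, OF i] by auto
      show "card {j. j < n \<and> A i j > 0} = card {j. j < n \<and> A i j < 0}" using a b by simp
    next
      fix j assume j: "j < n"
      have a: "card {i. i < n \<and> A i j > 0} = 2"
        unfolding A_def
        using count_split[of "\<lambda>v. v > 0" "\<lambda>i. F1 i j" "\<lambda>i. F2 i j" "\<lambda>i. G1 i j" "\<lambda>i. G2 i j" n] dis
          F1(8) F2(8) G1(8) G2(8) pK[rule_format, OF j] pL[rule_format, OF j] by auto
      have b: "card {i. i < n \<and> A i j < 0} = 2"
        unfolding A_def
        using count_split[of "\<lambda>v. v < 0" "\<lambda>i. F1 i j" "\<lambda>i. F2 i j" "\<lambda>i. G1 i j" "\<lambda>i. G2 i j" n] dis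
          F1(9) F2(9) G1(9) G2(9) pK[rule_format, OF j] pL[rule_format, OF j] by auto
      show "card {i. i < n \<and> A i j > 0} = card {i. i < n \<and> A i j < 0}" using a b by simp
    qed
  next
    have e1: "\<And>i j. (i, j) \<in> C1 \<Longrightarrow> A i j = F1 i j"
    proof -
      fix i j assume h: "(i, j) \<in> C1"
      hence "(i, j) \<notin> C2" "(i, j) \<notin> D1" "(i, j) \<notin> D2" using dC dD dCD by blast+
      thus "A i j = F1 i j" using F2(1) G1(1) G2(1) unfolding A_def by simp
    qed
    have e2: "\<And>i j. (i, j) \<in> C2 \<Longrightarrow> A i j = F2 i j"
    proof -
      fix i j assume h: "(i, j) \<in> C2"
      hence "(i, j) \<notin> C1" "(i, j) \<notin> D1" "(i, j) \<notin> D2" using dC dD dCD by blast+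
      thus "A i j = F2 i j" using F1(1) G1(1) G2(1) unfolding A_def by simp
    qed
    have e3: "\<And>i j. (i, j) \<in> D1 \<Longrightarrow> A i j = G1 i j"
    proof -
      fix i j assume h: "(i, j) \<in> D1"
      hence "(i, j) \<notin> C1" "(i, j) \<notin> C2" "(i, j) \<notin> D2" using dC dD dCD by blast+
      thus "A i j = G1 i j" using F1(1) F2(1) G2(1) unfolding A_def by simp
    qed
    have e4: "\<And>i j. (i, j) \<in> D2 \<Longrightarrow> A i j = G2 i j"
    proof -
      fix i j assume h: "(i, j) \<in> D2"
      hence "(i, j) \<notin> C1" "(i, j) \<notin> C2" "(i, j) \<notin> D1" using dC dD dCD by blast+
      thus "A i j = G2 i j" using F1(1) F2(1) G1(1) unfolding A_def by simp
    qed
    have b1: "bij_betw (\<lambda>(i, j). \<bar>A i j\<bar>) C1 ((\<lambda>i. X1 + int i) ` {1..n})"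
      using F1(3) by (rule bij_betw_cong[THEN iffD1, rotated]) (auto simp: e1)
    have b2: "bij_betw (\<lambda>(i, j). \<bar>A i j\<bar>) C2 ((\<lambda>i. X2 + int i) ` {1..n})"
      using F2(3) by (rule bij_betw_cong[THEN iffD1, rotated]) (auto simp: e2)
    have b3: "bij_betw (\<lambda>(i, j). \<bar>A i j\<bar>) D1 ((\<lambda>i. X3 + int i) ` {1..n})"
      using G1(3) by (rule bij_betw_cong[THEN iffD1, rotated]) (auto simp: e3)
    have b4: "bij_betw (\<lambda>(i, j). \<bar>A i j\<bar>) D2 ((\<lambda>i. X4 + int i) ` {1..n})"
      using G2(3) by (rule bij_betw_cong[THEN iffD1, rotated]) (auto simp: e4)
    show "bij_betw (\<lambda>(i, j). \<bar>A i j\<bar>) (C1 \<union> C2 \<union> D1 \<union> D2)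
       ((\<lambda>i. X1 + int i) ` {1..n} \<union> (\<lambda>i. X2 + int i) ` {1..n}
        \<union> (\<lambda>i. X3 + int i) ` {1..n} \<union> (\<lambda>i. X4 + int i) ` {1..n})"
      by (intro bij_betw_combine b1 b2 b3 b4 V)
  qed
qed



lemma rng_disj: "a + int n < b \<Longrightarrow> (\<lambda>i. a + int i) ` {1..n} \<inter> (\<lambda>i. b + int i) ` {1..n} = {}"
  by auto

theorem lemma2p4:
  fixes n :: nat and S1 S2 :: "(nat \<times> nat) set" and s t u v :: int
  assumes "even n"
    and "two_cycle_factor n S1" and "two_cycle_factor n S2"
    and "S1 \<inter> S2 = {}"
    and "s > 0" and "t > 0" and "u > 0" and "v > 0"
    and "s > t + int n" and "t > u + int n" and "u > v + int n"
  shows "\<exists>A :: nat \<Rightarrow> nat \<Rightarrow> int.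
     (\<forall>i j. (i, j) \<in> S1 \<union> S2 \<longrightarrow> A i j \<noteq> 0)
   \<and> (\<forall>i j. (i, j) \<notin> S1 \<union> S2 \<longrightarrow> A i j = 0)
   \<and> shiftable n A
   \<and> bij_betw (\<lambda>(i, j). \<bar>A i j\<bar>) (S1 \<union> S2)
       ((\<lambda>i. s + int i) ` {1..n} \<union> (\<lambda>i. t + int i) ` {1..n}
        \<union> (\<lambda>i. u + int i) ` {1..n} \<union> (\<lambda>i. v + int i) ` {1..n})
   \<and> (\<forall>i<n. (\<Sum>j<n. A i j) = 0)
   \<and> (\<forall>j<n. (\<Sum>i<n. A i j) = 0)"
proof -
  obtain C1 C2 where C: "two_factor n S1" "C1 \<inter> C2 = {}" "S1 = C1 \<union> C2" "bip_cycle n n C1" "bip_cycle n n C2"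
    using assms(2) unfolding two_cycle_factor_def by blast
  obtain D1 D2 where D: "two_factor n S2" "D1 \<inter> D2 = {}" "S2 = D1 \<union> D2" "bip_cycle n n D1" "bip_cycle n n D2"
    using assms(3) unfolding two_cycle_factor_def by blast
  have pR: "\<forall>i<n. (i \<in> fst ` C1) \<noteq> (i \<in> fst ` C2)" using partition_rows[OF C(1,3,2,4,5)] by blast
  have pQ: "\<forall>i<n. (i \<in> fst ` D1) \<noteq> (i \<in> fst ` D2)" using partition_rows[OF D(1,3,2,4,5)] by blast
  have pK: "\<forall>j<n. (j \<in> snd ` C1) \<noteq> (j \<in> snd ` C2)" using partition_cols[OF C(1,3,2,4,5)] by blast
  have pL: "\<forall>j<n. (j \<in> snd ` D1) \<noteq> (j \<in> snd ` D2)" using partition_cols[OF D(1,3,2,4,5)] by blast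
  have dCD: "(C1 \<union> C2) \<inter> (D1 \<union> D2) = {}" using assms(4) C(3) D(3) by simp
  have sub: "fst ` C1 \<subseteq> {..<n}" "fst ` C2 \<subseteq> {..<n}" "fst ` D1 \<subseteq> {..<n}" "fst ` D2 \<subseteq> {..<n}"
    using cycle_struct(1)[OF C(4)] cycle_struct(1)[OF C(5)] cycle_struct(1)[OF D(4)] cycle_struct(1)[OF D(5)]
    by auto
  have U1: "fst ` C1 \<union> fst ` C2 = {..<n}" using pR sub by auto
  have U2: "fst ` D1 \<union> fst ` D2 = {..<n}" using pQ sub by auto
  have I1: "fst ` C1 \<inter> fst ` C2 = {}" using pR sub by auto
  have I2: "fst ` D1 \<inter> fst ` D2 = {}"
  proof (rule equals0I)
    fix i assume i: "i \<in> fst ` D1 \<inter> fst ` D2"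
    hence "i < n" using sub(3) by auto
    thus False using pQ i by auto
  qed
  have cards: "card (fst ` C1) = n div 2" "card (fst ` C2) = n div 2" "card (fst ` D1) = n div 2" "card (fst ` D2) = n div 2"
    using cycle_struct(3)[OF C(4)] cycle_struct(3)[OF C(5)] cycle_struct(3)[OF D(4)] cycle_struct(3)[OF D(5)]
    by auto
  have ne: "fst ` C1 \<noteq> {}" by (rule cycle_struct(6)[OF C(4)])
  have Vst: "(\<lambda>i. s + int i) ` {1..n} \<inter> (\<lambda>i. t + int i) ` {1..n} = {}"
    using rng_disj[of t n s] assms by auto
  have Vsu: "(\<lambda>i. s + int i) ` {1..n} \<inter> (\<lambda>i. u + int i) ` {1..n} = {}"
    using rng_disj[of u n s] assms by auto
  have Vsv: "(\<lambda>i. s + int i) ` {1..n} \<inter> (\<lambda>i. v + int i) ` {1..n} = {}"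
    using rng_disj[of v n s] assms by auto
  have Vtu: "(\<lambda>i. t + int i) ` {1..n} \<inter> (\<lambda>i. u + int i) ` {1..n} = {}"
    using rng_disj[of u n t] assms by auto
  have Vtv: "(\<lambda>i. t + int i) ` {1..n} \<inter> (\<lambda>i. v + int i) ` {1..n} = {}"
    using rng_disj[of v n t] assms by auto
  have Vuv: "(\<lambda>i. u + int i) ` {1..n} \<inter> (\<lambda>i. v + int i) ` {1..n} = {}"
    using rng_disj[of v n u] assms by auto
  have X: "s \<ge> 0" "t \<ge> 0" "u \<ge> 0" "v \<ge> 0" using assms by auto
  have Vstu: "((\<lambda>i. s + int i) ` {1..n} \<union> (\<lambda>i. t + int i) ` {1..n}) \<inter> (\<lambda>i. u + int i) ` {1..n} = {}"
    using Vsu Vtu by (simp add: Int_Un_distrib2)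
  have Vstuv: "((\<lambda>i. s + int i) ` {1..n} \<union> (\<lambda>i. t + int i) ` {1..n} \<union> (\<lambda>i. u + int i) ` {1..n}) \<inter> (\<lambda>i. v + int i) ` {1..n} = {}"
    using Vsv Vtv Vuv by (simp add: Int_Un_distrib2)
  have Vstv: "((\<lambda>i. s + int i) ` {1..n} \<union> (\<lambda>i. t + int i) ` {1..n}) \<inter> (\<lambda>i. v + int i) ` {1..n} = {}"
    using Vsv Vtv by (simp add: Int_Un_distrib2)
  have Vstvu: "((\<lambda>i. s + int i) ` {1..n} \<union> (\<lambda>i. t + int i) ` {1..n} \<union> (\<lambda>i. v + int i) ` {1..n}) \<inter> (\<lambda>i. u + int i) ` {1..n} = {}"
    using Vsu Vtu Vuv by (auto simp: Int_Un_distrib2)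
  have dCD': "(C1 \<union> C2) \<inter> (D2 \<union> D1) = {}" using dCD by (simp add: Un_commute)
  have D2': "D2 \<inter> D1 = {}" using D(2) by (simp add: Int_commute)
  from choose_specials[OF _ U1 I1 U2 I2 cards ne]
  consider "fst ` C1 \<inter> fst ` D1 \<noteq> {}" "fst ` C2 \<inter> fst ` D2 \<noteq> {}"
    | "fst ` C1 \<inter> fst ` D2 \<noteq> {}" "fst ` C2 \<inter> fst ` D1 \<noteq> {}" by blast
  thus ?thesis
  proof cases
    case 1
    then obtain x y where x: "x \<in> fst ` C1" "x \<in> fst ` D1" and y: "y \<in> fst ` C2" "y \<in> fst ` D2" by blast
    have "\<exists>A :: nat \<Rightarrow> nat \<Rightarrow> int.
     (\<forall>i j. (i, j) \<in> C1 \<union> C2 \<union> D1 \<union> D2 \<longrightarrow> A i j \<noteq> 0)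
   \<and> (\<forall>i j. (i, j) \<notin> C1 \<union> C2 \<union> D1 \<union> D2 \<longrightarrow> A i j = 0)
   \<and> shiftable n A
   \<and> bij_betw (\<lambda>(i, j). \<bar>A i j\<bar>) (C1 \<union> C2 \<union> D1 \<union> D2)
       ((\<lambda>i. s + int i) ` {1..n} \<union> (\<lambda>i. t + int i) ` {1..n}
        \<union> (\<lambda>i. u + int i) ` {1..n} \<union> (\<lambda>i. v + int i) ` {1..n})
   \<and> (\<forall>i<n. (\<Sum>j<n. A i j) = 0)
   \<and> (\<forall>j<n. (\<Sum>i<n. A i j) = 0)"
      by (rule assemble[OF C(4,5) D(4,5) pR pQ pK pL C(2) D(2) dCD x y X Vst Vstu Vstuv])
    moreover have "C1 \<union> C2 \<union> D1 \<union> D2 = S1 \<union> S2" using C(3) D(3) by auto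
    ultimately show ?thesis by metis
  next
    case 2
    then obtain x y where x: "x \<in> fst ` C1" "x \<in> fst ` D2" and y: "y \<in> fst ` C2" "y \<in> fst ` D1" by blast
    have pQ': "\<forall>i<n. (i \<in> fst ` D2) \<noteq> (i \<in> fst ` D1)" using pQ by auto
    have pL': "\<forall>j<n. (j \<in> snd ` D2) \<noteq> (j \<in> snd ` D1)" using pL by auto
    have "\<exists>A :: nat \<Rightarrow> nat \<Rightarrow> int.
     (\<forall>i j. (i, j) \<in> C1 \<union> C2 \<union> D2 \<union> D1 \<longrightarrow> A i j \<noteq> 0)
   \<and> (\<forall>i j. (i, j) \<notin> C1 \<union> C2 \<union> D2 \<union> D1 \<longrightarrow> A i j = 0)
   \<and> shiftable n A
   \<and> bij_betw (\<lambda>(i, j). \<bar>A i j\<bar>) (C1 \<union> C2 \<union> D2 \<union> D1)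
       ((\<lambda>i. s + int i) ` {1..n} \<union> (\<lambda>i. t + int i) ` {1..n}
        \<union> (\<lambda>i. v + int i) ` {1..n} \<union> (\<lambda>i. u + int i) ` {1..n})
   \<and> (\<forall>i<n. (\<Sum>j<n. A i j) = 0)
   \<and> (\<forall>j<n. (\<Sum>i<n. A i j) = 0)"
      by (rule assemble[OF C(4,5) D(5,4) pR pQ' pK pL' C(2) D2' dCD' x y X(1,2,4,3) Vst Vstv Vstvu])
    moreover have "C1 \<union> C2 \<union> D2 \<union> D1 = S1 \<union> S2" using C(3) D(3) by auto
    moreover have "(\<lambda>i. s + int i) ` {1..n} \<union> (\<lambda>i. t + int i) ` {1..n}
        \<union> (\<lambda>i. v + int i) ` {1..n} \<union> (\<lambda>i. u + int i) ` {1..n} =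
        (\<lambda>i. s + int i) ` {1..n} \<union> (\<lambda>i. t + int i) ` {1..n}
        \<union> (\<lambda>i. u + int i) ` {1..n} \<union> (\<lambda>i. v + int i) ` {1..n}" by auto
    ultimately show ?thesis by metis
  qed
qed


end
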